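(* Let $V=\{v_1,\dots,v_n\}$ be the cities of a symmetric TSP instance on the complete graph $K_n$ with nonnegative edge weights $w$. Let $I$ (white edges) and $X$ (excluded edges) be disjoint sets of edges, and let $g$ be a Hamiltonian cycle on $V$ that contains every edge of $I$ and no edge of $X$. Then the weight of the constrained 1-tree with respect to $(I,X)$ is at most the weight $w(g)=\sum_{e\in g}w(e)$.
   Context: The constrained 1-tree with respect to $(I,X)$ is built in two steps. (1) Constrained MST: run Prim's algorithm on the complete graph on $\{v_2,\dots,v_n\}$ with all edges of $X$ discarded, where any edge of $I$ crossing the current cut is given the highest priority (selected before any edge not in $I$) and the remaining candidate edges are ranked by weight. (2) Connect $v_1$ to this tree by two edges: every edge of $I$ incident with $v_1$ is selected regardless of cost, every edge of $X$ incident with $v_1$ is discarded, and the remaining edges incident with $v_1$ are selected in order of increasing weight until two edges incident with $v_1$ have been chosen. The constrained 1-tree is the union of the constrained MST and these two edges; its weight is the sum of its edge weights. In the paper's setting, $I$ and $X$ are the white and excluded edges of a Stem-and-Cycle configuration $c$ in an ejection chain, and $g$ is the goal tour toward which these constraints lead, which therefore contains all of $I$ and none of $X$. *)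

theory Defs
  imports Complex_Main
begin

definition complete_edges :: "'a set \<Rightarrow> 'a set set" where
  "complete_edges V = {e. \<exists>u v. u \<in> V \<and> v \<in> V \<and> u \<noteq> v \<and> e = {u, v}}"

definition cycle_edges :: "'a list \<Rightarrow> 'a set set" where
  "cycle_edges vs = {{vs ! i, vs ! ((i + 1) mod length vs)} | i. i < length vs}"

definition hamiltonian_cycle :: "'a set \<Rightarrow> 'a set set \<Rightarrow> bool" where
  "hamiltonian_cycle V g \<longleftrightarrow>
     (\<exists>vs. distinct vs \<and> set vs = V \<and> length vs \<ge> 3 \<and> g = cycle_edges vs)"

definition crossing :: "'a set \<Rightarrow> 'a set \<Rightarrow> 'a set \<Rightarrow> bool" where
  "crossing W S e \<longleftrightarrow> (\<exists>u x. u \<in> S \<and> x \<in> W - S \<and> e = {u, x})"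

(* Prim's selection rule: edges of X are discarded; an edge of I crossing the cut has
   priority over any edge not in I; within each priority class, edges are ranked by weight. *)
definition prim_choice ::
  "'a set \<Rightarrow> ('a set \<Rightarrow> real) \<Rightarrow> 'a set set \<Rightarrow> 'a set set \<Rightarrow> 'a set \<Rightarrow> 'a set \<Rightarrow> bool" where
  "prim_choice W w I X S e \<longleftrightarrow>
     crossing W S e \<and> e \<notin> X \<and>
     ((e \<in> I \<and> (\<forall>e'. crossing W S e' \<and> e' \<in> I \<and> e' \<notin> X \<longrightarrow> w e \<le> w e')) \<or>
      (e \<notin> I \<and> \<not> (\<exists>e'. crossing W S e' \<and> e' \<in> I \<and> e' \<notin> X) \<and>
         (\<forall>e'. crossing W S e' \<and> e' \<notin> X \<longrightarrow> w e \<le> w e')))"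

inductive prim_state ::
  "'a set \<Rightarrow> ('a set \<Rightarrow> real) \<Rightarrow> 'a set set \<Rightarrow> 'a set set \<Rightarrow> 'a set \<Rightarrow> 'a set set \<Rightarrow> bool"
  for W w I X where
  start: "r \<in> W \<Longrightarrow> prim_state W w I X {r} {}"
| step: "prim_state W w I X S T \<Longrightarrow> u \<in> S \<Longrightarrow> x \<in> W - S \<Longrightarrow>
         prim_choice W w I X S {u, x} \<Longrightarrow>
         prim_state W w I X (insert x S) (insert {u, x} T)"

definition constrained_mst ::
  "'a set \<Rightarrow> ('a set \<Rightarrow> real) \<Rightarrow> 'a set set \<Rightarrow> 'a set set \<Rightarrow> 'a set set \<Rightarrow> bool" where
  "constrained_mst W w I X T \<longleftrightarrow> prim_state W w I X W T"

(* All I-edges at v1 are taken, X-edges at v1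
   are discarded, remaining edges at v1 are taken greedily by increasing weight until two
   edges at v1 are chosen. *)
definition v1_edges :: "'a set \<Rightarrow> 'a \<Rightarrow> 'a set set" where
  "v1_edges V v1 = {{v1, x} | x. x \<in> V \<and> x \<noteq> v1}"

definition v1_connection ::
  "'a set \<Rightarrow> 'a \<Rightarrow> ('a set \<Rightarrow> real) \<Rightarrow> 'a set set \<Rightarrow> 'a set set \<Rightarrow> 'a set set \<Rightarrow> bool" where
  "v1_connection V v1 w I X F \<longleftrightarrow>
     (let Iv = v1_edges V v1 \<inter> I; C = v1_edges V v1 - I - X in
      \<exists>G. G \<subseteq> C \<and> card G = 2 - card Iv \<and> F = Iv \<union> G \<and>
          (\<forall>e\<in>G. \<forall>e'\<in>C - G. w e \<le> w e'))"

definition constrained_one_tree ::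
  "'a set \<Rightarrow> 'a \<Rightarrow> ('a set \<Rightarrow> real) \<Rightarrow> 'a set set \<Rightarrow> 'a set set \<Rightarrow> 'a set set \<Rightarrow> bool" where
  "constrained_one_tree V v1 w I X OT \<longleftrightarrow>
     (\<exists>T F. constrained_mst (V - {v1}) w I X T \<and> v1_connection V v1 w I X F \<and> OT = T \<union> F)"

end

theory Submission
  imports Defs
begin

definition erel :: "'a set set \<Rightarrow> ('a \<times> 'a) set" where
  "erel Q = {(p,q). {p,q} \<in> Q}"

definition conn :: "'a set \<Rightarrow> 'a set set \<Rightarrow> bool" where
  "conn W Q \<longleftrightarrow> (\<forall>a\<in>W. \<forall>b\<in>W. (a,b) \<in> (erel Q)\<^sup>*)"

lemma erel_mono: "Q \<subseteq> Q' \<Longrightarrow> (erel Q)\<^sup>* \<subseteq> (erel Q')\<^sup>*"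
  by (rule rtrancl_mono) (auto simp: erel_def)

lemma erel_sym: "(a,b) \<in> (erel Q)\<^sup>* \<Longrightarrow> (b,a) \<in> (erel Q)\<^sup>*"
proof -
  have "sym (erel Q)" by (auto simp: sym_def erel_def insert_commute)
  then have "sym ((erel Q)\<^sup>*)" by (rule sym_rtrancl)
  then show "(a,b) \<in> (erel Q)\<^sup>* \<Longrightarrow> (b,a) \<in> (erel Q)\<^sup>*" by (auto simp: sym_def)
qed

lemma L1:
  assumes "(a,b) \<in> (erel Q)\<^sup>*"
  shows "(a,b) \<in> (erel (Q-{f}))\<^sup>* \<or>
    (\<exists>c d. f = {c,d} \<and> (a,c) \<in> (erel (Q-{f}))\<^sup>* \<and> (d,b) \<in> (erel (Q-{f}))\<^sup>*)"
  using assms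
proof (induction rule: rtrancl_induct)
  case base
  then show ?case by simp
next
  case (step y z)
  have yz: "{y,z} \<in> Q" using step(2) by (simp add: erel_def)
  show ?case
  proof (cases "{y,z} = f")
    case True
    from step(3) show ?thesis
    proof
      assume "(a, y) \<in> (erel (Q - {f}))\<^sup>*"
      then show ?thesis using True by blast
    next
      assume "\<exists>c d. f = {c, d} \<and> (a, c) \<in> (erel (Q - {f}))\<^sup>* \<and> (d, y) \<in> (erel (Q - {f}))\<^sup>*"
      then obtain c d where cd: "f = {c, d}" "(a, c) \<in> (erel (Q - {f}))\<^sup>*" "(d, y) \<in> (erel (Q - {f}))\<^sup>*" by blast
      have "z = c \<or> z = d" using cd(1) True by (metis doubleton_eq_iff insertI1 insert_commute)
      then show ?thesis
      proof
        assume "z = c" then show ?thesis using cd by blast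
      next
        assume "z = d" then show ?thesis using cd by blast
      qed
    qed
  next
    case False
    then have e: "(y,z) \<in> erel (Q-{f})" using yz by (simp add: erel_def)
    from step(3) show ?thesis
    proof
      assume "(a, y) \<in> (erel (Q - {f}))\<^sup>*"
      then show ?thesis using e by (meson rtrancl.rtrancl_into_rtrancl)
    next
      assume "\<exists>c d. f = {c, d} \<and> (a, c) \<in> (erel (Q - {f}))\<^sup>* \<and> (d, y) \<in> (erel (Q - {f}))\<^sup>*"
      then obtain c d where "f = {c, d}" "(a, c) \<in> (erel (Q - {f}))\<^sup>*" "(d, y) \<in> (erel (Q - {f}))\<^sup>*" by blast
      moreover have "(d, z) \<in> (erel (Q - {f}))\<^sup>*" using calculation(3) e by (rule rtrancl.rtrancl_into_rtrancl)
      ultimately show ?thesis by blast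
    qed
  qed
qed

lemma L3:
  assumes "(a,b) \<in> (erel Q)\<^sup>*" "a \<in> S"
  shows "b \<notin> S \<longrightarrow> (\<exists>c d. {c,d} \<in> Q \<and> c \<in> S \<and> d \<notin> S \<and> (a,c) \<in> (erel Q)\<^sup>* \<and> (d,b) \<in> (erel Q)\<^sup>*)"
  using assms(1)
proof (induction rule: rtrancl_induct)
  case base
  then show ?case using assms(2) by simp
next
  case (step y z)
  have yz: "{y,z} \<in> Q" using step(2) by (simp add: erel_def)
  show ?case
  proof
    assume z: "z \<notin> S"
    show "\<exists>c d. {c,d} \<in> Q \<and> c \<in> S \<and> d \<notin> S \<and> (a,c) \<in> (erel Q)\<^sup>* \<and> (d,z) \<in> (erel Q)\<^sup>*"
    proof (cases "y \<in> S")
      case True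
      then show ?thesis using yz z step(1) by blast
    next
      case False
      then show ?thesis using step(3) step(2) by (meson rtrancl.rtrancl_into_rtrancl)
    qed
  qed
qed

lemma L2:
  assumes "finite Q"
  shows "(u,x) \<in> (erel Q)\<^sup>* \<Longrightarrow> u \<in> S \<Longrightarrow> x \<notin> S \<Longrightarrow>
    \<exists>c d. {c,d} \<in> Q \<and> c \<in> S \<and> d \<notin> S \<and> (c,d) \<in> (erel (insert {u,x} (Q-{{c,d}})))\<^sup>*"
  using assms
proof (induction Q rule: finite_psubset_induct)
  case (psubset Q)
  obtain c d where cd: "{c,d} \<in> Q" "c \<in> S" "d \<notin> S"
    using L3[OF psubset(3) psubset(4)] psubset(5) by blast
  define f where "f = {c,d}"
  have sub: "Q - {f} \<subset> Q" using cd(1) f_def by blast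
  define Q' where "Q' = insert {u,x} (Q-{f})"
  have m1: "(erel (Q-{f}))\<^sup>* \<subseteq> (erel Q')\<^sup>*" unfolding Q'_def by (rule erel_mono) blast
  have ux: "(u,x) \<in> (erel Q')\<^sup>*" "(x,u) \<in> (erel Q')\<^sup>*"
    unfolding Q'_def erel_def by (auto simp: insert_commute)
  from L1[OF psubset(3), of f] show ?case
  proof
    assume h: "(u, x) \<in> (erel (Q - {f}))\<^sup>*"
    obtain c' d' where h2: "{c',d'} \<in> Q - {f}" "c' \<in> S" "d' \<notin> S"
       "(c',d') \<in> (erel (insert {u,x} (Q-{f}-{{c',d'}})))\<^sup>*"
      using psubset(2)[OF sub h psubset(4) psubset(5)] by blast
    have m: "(erel (insert {u,x} (Q-{f}-{{c',d'}})))\<^sup>* \<subseteq> (erel (insert {u,x} (Q-{{c',d'}})))\<^sup>*"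
      by (rule erel_mono) blast
    show ?thesis using h2 m by blast
  next
    assume "\<exists>c1 d1. f = {c1, d1} \<and> (u, c1) \<in> (erel (Q - {f}))\<^sup>* \<and> (d1, x) \<in> (erel (Q - {f}))\<^sup>*"
    then obtain c1 d1 where h: "f = {c1, d1}" "(u, c1) \<in> (erel Q')\<^sup>*" "(d1, x) \<in> (erel Q')\<^sup>*"
      using m1 by blast
    have "(c,d) \<in> (erel Q')\<^sup>*"
    proof (cases "c1 = c")
      case True
      then have "d1 = d" using h(1) f_def by (metis doubleton_eq_iff)
      then show ?thesis using True h ux erel_sym by (meson rtrancl_trans)
    next
      case False
      then have "c1 = d" "d1 = c" using h(1) f_def by (metis doubleton_eq_iff)+
      then show ?thesis using h ux erel_sym by (meson rtrancl_trans)
    qed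
    then show ?thesis using cd f_def Q'_def by blast
  qed
qed

lemma prim_inv:
  assumes "prim_state W w I X S T"
  shows "S \<subseteq> W \<and> (\<forall>t\<in>T. t \<subseteq> S) \<and> finite S"
  using assms by induction auto

lemma prim_main:
  assumes "prim_state W w I X S T" and "finite P" "P \<subseteq> complete_edges W" "conn W P"
    "I \<inter> complete_edges W \<subseteq> P" "P \<inter> X = {}" "I \<inter> X = {}"
  shows "\<exists>Q. finite Q \<and> Q \<subseteq> complete_edges W \<and> conn W Q \<and> I \<inter> complete_edges W \<subseteq> Q
      \<and> Q \<inter> X = {} \<and> T \<subseteq> Q \<and> sum w Q \<le> sum w P"
  using assms(1)
proof induction
  case (start r)
  then show ?case using assms by blast
next
  case (step S T u x)
  obtain Q where Q: "finite Q" "Q \<subseteq> complete_edges W" "conn W Q" "I \<inter> complete_edges W \<subseteq> Q"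
      "Q \<inter> X = {}" "T \<subseteq> Q" "sum w Q \<le> sum w P" using step.IH by blast
  have inv: "S \<subseteq> W" "\<forall>t\<in>T. t \<subseteq> S" using prim_inv[OF step.hyps(1)] by auto
  define e where "e = {u,x}"
  have eW: "e \<in> complete_edges W" using inv step.hyps(2,3) unfolding e_def complete_edges_def by blast
  show ?case
  proof (cases "e \<in> Q")
    case True
    then show ?thesis using Q e_def by blast
  next
    case False
    then have eI: "e \<notin> I" using Q(4) eW by blast
    have pc: "e \<notin> X" "\<forall>e'. crossing W S e' \<and> e' \<notin> X \<longrightarrow> w e \<le> w e'"
      "\<not> (\<exists>e'. crossing W S e' \<and> e' \<in> I \<and> e' \<notin> X)"
      using step.hyps(4) eI unfolding prim_choice_def e_def by auto
    have "(u,x) \<in> (erel Q)\<^sup>*" using Q(3) inv step.hyps(2,3) unfolding conn_def by blast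
    then obtain c d where cd: "{c,d} \<in> Q" "c \<in> S" "d \<notin> S"
        "(c,d) \<in> (erel (insert {u,x} (Q-{{c,d}})))\<^sup>*"
      using L2[OF Q(1)] step.hyps(2,3) by blast
    define f where "f = {c,d}"
    define Q' where "Q' = insert e (Q - {f})"
    have dW: "d \<in> W"
    proof -
      obtain p q where "p \<in> W" "q \<in> W" "{c,d} = {p,q}" using cd(1) Q(2) unfolding complete_edges_def by blast
      then show ?thesis by (metis doubleton_eq_iff)
    qed
    have fcross: "crossing W S f" unfolding crossing_def f_def using cd dW by blast
    have fX: "f \<notin> X" using cd(1) Q(5) f_def by blast
    have fI: "f \<notin> I" using pc(3) fcross fX by blast
    have wef: "w e \<le> w f" using pc(2) fcross fX by blast
    have fT: "f \<notin> T" using inv(2) cd(3) f_def by blast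
    have conn': "conn W Q'"
      unfolding conn_def
    proof (intro ballI)
      fix a b assume "a \<in> W" "b \<in> W"
      then have ab: "(a,b) \<in> (erel Q)\<^sup>*" using Q(3) unfolding conn_def by blast
      have "erel Q \<subseteq> (erel Q')\<^sup>*"
      proof
        fix p assume "p \<in> erel Q"
        then obtain p1 p2 where p: "p = (p1,p2)" "{p1,p2} \<in> Q" unfolding erel_def by blast
        show "p \<in> (erel Q')\<^sup>*"
        proof (cases "{p1,p2} = f")
          case False
          then show ?thesis using p unfolding erel_def Q'_def by blast
        next
          case True
          have cd': "(c,d) \<in> (erel Q')\<^sup>*" using cd(4) unfolding Q'_def e_def f_def .
          then have "(d,c) \<in> (erel Q')\<^sup>*" by (rule erel_sym)
          then show ?thesis using True cd' p(1) f_def by (metis doubleton_eq_iff)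
        qed
      qed
      then have "(erel Q)\<^sup>* \<subseteq> (erel Q')\<^sup>*" by (metis rtrancl_subset_rtrancl)
      then show "(a,b) \<in> (erel Q')\<^sup>*" using ab by blast
    qed
    have "sum w Q' = sum w (Q - {f}) + w e" unfolding Q'_def using Q(1) False by simp
    also have "\<dots> = sum w Q - w f + w e" using Q(1) cd(1) f_def by (simp add: sum_diff1)
    finally have "sum w Q' \<le> sum w Q" using wef by simp
    then have "sum w Q' \<le> sum w P" using Q(7) by simp
    moreover have "finite Q'" "Q' \<subseteq> complete_edges W" "I \<inter> complete_edges W \<subseteq> Q'"
      "Q' \<inter> X = {}" "insert {u,x} T \<subseteq> Q'"
      using Q eW fI pc(1) fT unfolding Q'_def e_def by auto
    ultimately show ?thesis using conn' by blast
  qed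
qed

lemma cyc_rotate: "cycle_edges (rotate m xs) = cycle_edges xs"
proof (cases "xs = []")
  case True then show ?thesis by simp
next
  case False
  define n where "n = length xs"
  have n: "n > 0" using False n_def by simp
  have r: "\<And>i. i<n \<Longrightarrow> {rotate m xs ! i, rotate m xs ! ((i+1) mod n)} = {xs!((m+i) mod n), xs!((m+(i+1) mod n) mod n)}"
    using n by (simp add: nth_rotate n_def)
  have "cycle_edges (rotate m xs) = {{rotate m xs ! i, rotate m xs ! ((i+1) mod n)} | i. i<n}"
    unfolding cycle_edges_def n_def by simp
  also have "\<dots> = {{xs ! ((m+i) mod n), xs ! ((m + (i+1) mod n) mod n)} | i. i < n}"
    using r by (intro Collect_cong) auto
  also have "\<dots> = {{xs ! j, xs ! ((j+1) mod n)} | j. j < n}"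
  proof (intro set_eqI iffI)
    fix z assume "z \<in> {{xs ! ((m+i) mod n), xs ! ((m + (i+1) mod n) mod n)} | i. i < n}"
    then obtain i where "i < n" "z = {xs ! ((m+i) mod n), xs ! ((m + (i+1) mod n) mod n)}" by blast
    moreover have "(m + (i+1) mod n) mod n = ((m+i) mod n + 1) mod n"
      by (metis add.assoc mod_add_left_eq mod_add_right_eq)
    ultimately show "z \<in> {{xs ! j, xs ! ((j+1) mod n)} | j. j < n}" using n by auto
  next
    fix z assume "z \<in> {{xs ! j, xs ! ((j+1) mod n)} | j. j < n}"
    then obtain j where j: "j < n" "z = {xs ! j, xs ! ((j+1) mod n)}" by blast
    define i where "i = (j + (n - m mod n)) mod n"
    have i1: "(m+i) mod n = j"
    proof -
      have "(m+i) mod n = (m mod n + (j + (n - m mod n))) mod n" unfolding i_def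
        by (metis mod_add_left_eq mod_add_right_eq)
      also have "m mod n + (j + (n - m mod n)) = j + n" using n
        by (metis add.commute add.left_commute le_add_diff_inverse less_imp_le_nat mod_less_divisor)
      finally show ?thesis using j(1) by simp
    qed
    have "(m + (i+1) mod n) mod n = ((m+i) mod n + 1) mod n"
      by (metis add.assoc mod_add_left_eq mod_add_right_eq)
    then have "z = {xs ! ((m+i) mod n), xs ! ((m + (i+1) mod n) mod n)}" using i1 j by simp
    moreover have "i < n" unfolding i_def using n by simp
    ultimately show "z \<in> {{xs ! ((m+i) mod n), xs ! ((m + (i+1) mod n) mod n)} | i. i < n}" by blast
  qed
  also have "\<dots> = cycle_edges xs" unfolding cycle_edges_def n_def by simp
  finally show ?thesis .
qed

lemma cyc_finite: "finite (cycle_edges vs)"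
  unfolding cycle_edges_def by (rule finite_image_set) simp

lemma cyc_complete:
  assumes "distinct vs" "length vs \<ge> 2"
  shows "cycle_edges vs \<subseteq> complete_edges (set vs)"
proof
  fix e assume "e \<in> cycle_edges vs"
  then obtain i where i: "i < length vs" "e = {vs ! i, vs ! ((i + 1) mod length vs)}"
    unfolding cycle_edges_def by blast
  have "i \<noteq> (i+1) mod length vs" using assms(2) i(1)
  proof (cases "i + 1 < length vs")
    case False
    then have "i + 1 = length vs" using i(1) by simp
    then have "(i+1) mod length vs = 0" by simp
    then show ?thesis using \<open>i + 1 = length vs\<close> assms(2) by simp
  qed simp
  moreover have "(i+1) mod length vs < length vs" using i(1) by (intro mod_less_divisor) linarith
  ultimately have "vs ! i \<noteq> vs ! ((i + 1) mod length vs)"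
    using nth_eq_iff_index_eq[OF assms(1) i(1)] by blast
  moreover have "vs ! i \<in> set vs" "vs ! ((i + 1) mod length vs) \<in> set vs"
    using i(1) \<open>(i+1) mod length vs < length vs\<close> by simp_all
  ultimately show "e \<in> complete_edges (set vs)" unfolding complete_edges_def using i(2) by blast
qed

lemma cyc_path:
  assumes "i + 1 < length rest"
  shows "{rest!i, rest!(i+1)} \<in> cycle_edges (v1#rest)"
proof -
  have "(i + 2) mod length (v1#rest) = i + 2" using assms by simp
  then have "{(v1#rest) ! (i+1), (v1#rest) ! ((i+1 + 1) mod length (v1#rest))} = {rest!i, rest!(i+1)}"
    by simp
  moreover have "i + 1 < length (v1#rest)" using assms by simp
  ultimately have "\<exists>j. {rest!i, rest!(i+1)} = {(v1#rest) ! j, (v1#rest) ! ((j + 1) mod length (v1#rest))} \<and> j < length (v1#rest)"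
    by (intro exI[of _ "i+1"]) simp
  then show ?thesis unfolding cycle_edges_def by simp
qed

lemma cyc_v1:
  assumes "length rest \<ge> 2"
  shows "{v1, rest!0} \<in> cycle_edges (v1#rest)" "{v1, last rest} \<in> cycle_edges (v1#rest)"
proof -
  have "(0 + 1) mod length (v1#rest) = 1" using assms by (cases rest) auto
  then have "{(v1#rest) ! 0, (v1#rest) ! ((0 + 1) mod length (v1#rest))} = {v1, rest!0}" by simp
  then have "\<exists>j. {v1, rest!0} = {(v1#rest) ! j, (v1#rest) ! ((j + 1) mod length (v1#rest))} \<and> j < length (v1#rest)"
    by (intro exI[of _ 0]) simp
  then show "{v1, rest!0} \<in> cycle_edges (v1#rest)" unfolding cycle_edges_def by simp
  have l: "length rest < length (v1#rest)" by simp
  have "(length rest + 1) mod length (v1#rest) = 0" by simp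
  moreover have "(v1#rest) ! length rest = last rest"
  proof -
    have "rest \<noteq> []" using assms by auto
    then show ?thesis by (cases rest) (auto simp: last_conv_nth)
  qed
  ultimately have "{(v1#rest) ! length rest, (v1#rest) ! ((length rest + 1) mod length (v1#rest))} = {v1, last rest}"
    by (simp add: insert_commute)
  then have "\<exists>j. {v1, last rest} = {(v1#rest) ! j, (v1#rest) ! ((j + 1) mod length (v1#rest))} \<and> j < length (v1#rest)"
    using l by (intro exI[of _ "length rest"]) simp
  then show "{v1, last rest} \<in> cycle_edges (v1#rest)" unfolding cycle_edges_def by simp
qed

lemma greedy_sum:
  fixes w :: "'a \<Rightarrow> real"
  assumes "finite C" "G \<subseteq> C" "H \<subseteq> C" "card G \<le> card H"
    "\<forall>e\<in>G. \<forall>e'\<in>C - G. w e \<le> w e'" "\<forall>e\<in>H. w e \<ge> 0"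
  shows "sum w G \<le> sum w H"
proof -
  have fG: "finite G" "finite H" using finite_subset[OF assms(2,1)] finite_subset[OF assms(3,1)] by auto
  have sG: "sum w G = sum w (G \<inter> H) + sum w (G - H)"
    using fG(1) by (rule sum.Int_Diff)
  have sH: "sum w H = sum w (G \<inter> H) + sum w (H - G)"
    using sum.Int_Diff[OF fG(2), of w G] by (simp add: Int_commute)
  have cd: "card (G - H) \<le> card (H - G)"
  proof -
    have "card G = card (G \<inter> H) + card (G - H)" using fG(1) by (rule card_Int_Diff)
    moreover have "card H = card (G \<inter> H) + card (H - G)"
      using card_Int_Diff[OF fG(2), of G] by (simp add: Int_commute)
    ultimately show ?thesis using assms(4) by simp
  qed
  show ?thesis
  proof (cases "H - G = {}")
    case True
    then have "card (G - H) = 0" using cd by (metis card.empty le_zero_eq)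
    then have "G - H = {}" using fG by simp
    then show ?thesis using sG sH True by simp
  next
    case False
    define a where "a = Min (w ` (H - G))"
    have fin: "finite (w ` (H - G))" using fG by simp
    obtain e0 where e0: "e0 \<in> H - G" "a = w e0" unfolding a_def
      using Min_in[OF fin] False by auto
    have a0: "a \<ge> 0" using e0 assms(6) by auto
    have le1: "\<forall>e\<in>G - H. w e \<le> a" using e0 assms(5,3) by auto
    have le2: "\<forall>e\<in>H - G. a \<le> w e" unfolding a_def using fin by auto
    have "sum w (G - H) \<le> sum (\<lambda>_. a) (G - H)" using le1 by (intro sum_mono) auto
    also have "\<dots> = real (card (G - H)) * a" by simp
    also have "\<dots> \<le> real (card (H - G)) * a" using cd a0 by (intro mult_right_mono) auto
    also have "\<dots> = sum (\<lambda>_. a) (H - G)" by simp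
    also have "\<dots> \<le> sum w (H - G)" using le2 by (intro sum_mono) auto
    finally show ?thesis using sG sH by simp
  qed
qed

lemma path_conn:
  assumes "\<And>i. i + 1 < length rest \<Longrightarrow> {rest!i, rest!(i+1)} \<in> P"
  shows "conn (set rest) P"
proof -
  have r: "i < length rest \<Longrightarrow> (rest!0, rest!i) \<in> (erel P)\<^sup>*" for i
  proof (induction i)
    case 0 then show ?case by simp
  next
    case (Suc i)
    then have "(rest!i, rest!(Suc i)) \<in> erel P" using assms[of i] unfolding erel_def by simp
    then show ?case using Suc by (meson Suc_lessD rtrancl.rtrancl_into_rtrancl)
  qed
  show ?thesis unfolding conn_def
  proof (intro ballI)
    fix a b assume "a \<in> set rest" "b \<in> set rest"
    then obtain i j where "i < length rest" "a = rest!i" "j < length rest" "b = rest!j"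
      by (metis in_set_conv_nth)
    then show "(a,b) \<in> (erel P)\<^sup>*" using r erel_sym by (meson rtrancl_trans)
  qed
qed

lemma v1_edges_finite: "finite V \<Longrightarrow> finite (v1_edges V v1)"
  unfolding v1_edges_def by (rule finite_image_set) simp

theorem theorem1:
  fixes V :: "'a set" and v1 :: 'a and w :: "'a set \<Rightarrow> real"
    and I X g OT :: "'a set set"
  assumes "finite V" and "v1 \<in> V"
    and "\<forall>e \<in> complete_edges V. w e \<ge> 0"
    and "I \<subseteq> complete_edges V" and "X \<subseteq> complete_edges V" and "I \<inter> X = {}"
    and "hamiltonian_cycle V g" and "I \<subseteq> g" and "g \<inter> X = {}"
    and "constrained_one_tree V v1 w I X OT"
  shows "(\<Sum>e\<in>OT. w e) \<le> (\<Sum>e\<in>g. w e)"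
proof -
  obtain vs where vs: "distinct vs" "set vs = V" "length vs \<ge> 3" "g = cycle_edges vs"
    using assms(7) unfolding hamiltonian_cycle_def by blast
  obtain k where k: "k < length vs" "vs ! k = v1" using assms(2) vs(2) by (metis in_set_conv_nth)
  define vs' where "vs' = rotate k vs"
  have vs': "distinct vs'" "set vs' = V" "length vs' \<ge> 3" "g = cycle_edges vs'"
    using vs unfolding vs'_def by (simp_all add: cyc_rotate)
  have vsne: "vs \<noteq> []" using k(1) by (cases vs) auto
  have "vs' ! 0 = v1" unfolding vs'_def using nth_rotate[of 0 vs k] k vsne by simp
  then obtain rest where rest: "vs' = v1 # rest" using vs'(3) by (cases vs') auto
  define W where "W = V - {v1}"
  have Wr: "W = set rest" using vs'(1,2) rest unfolding W_def by auto
  have lr: "length rest \<ge> 2" using vs'(3) rest by simp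
  have dr: "distinct rest" using vs'(1) rest by simp
  have gc: "g \<subseteq> complete_edges V" using cyc_complete[of vs'] vs' by simp
  have fg: "finite g" using vs'(4) cyc_finite by simp
  have nonneg: "\<And>e. e \<in> g \<Longrightarrow> w e \<ge> 0" using gc assms(3) by blast
  define P where "P = {e\<in>g. v1 \<notin> e}"
  define g1 where "g1 = {e\<in>g. v1 \<in> e}"
  have PcW: "P \<subseteq> complete_edges W"
  proof
    fix e assume "e \<in> P"
    then have "e \<in> complete_edges V" "v1 \<notin> e" using gc unfolding P_def by auto
    then show "e \<in> complete_edges W" unfolding complete_edges_def W_def by auto
  qed
  have cW: "complete_edges W \<subseteq> complete_edges V" unfolding complete_edges_def W_def by blast
  have fP: "finite P" using fg unfolding P_def by simp
  have connP: "conn W P" unfolding Wr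
  proof (rule path_conn)
    fix i assume "i + 1 < length rest"
    then have "{rest!i, rest!(i+1)} \<in> g" using cyc_path vs'(4) rest by metis
    moreover have "v1 \<notin> {rest!i, rest!(i+1)}" using vs'(1) rest \<open>i + 1 < length rest\<close>
      by (auto dest: nth_mem)
    ultimately show "{rest!i, rest!(i+1)} \<in> P" unfolding P_def by blast
  qed
  have JP: "I \<inter> complete_edges W \<subseteq> P"
    using assms(8) unfolding P_def complete_edges_def W_def by auto
  have PX: "P \<inter> X = {}" using assms(9) unfolding P_def by blast
  obtain T F where TF: "constrained_mst W w I X T" "v1_connection V v1 w I X F" "OT = T \<union> F"
    using assms(10) unfolding constrained_one_tree_def W_def by blast
  have pst: "prim_state W w I X W T" using TF(1) unfolding constrained_mst_def .
  obtain Q where Q: "finite Q" "Q \<subseteq> complete_edges W" "T \<subseteq> Q" "sum w Q \<le> sum w P"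
    using prim_main[OF pst fP PcW connP JP PX assms(6)] by blast
  have Tv1: "\<forall>t\<in>T. v1 \<notin> t" using prim_inv[OF pst] unfolding W_def by blast
  have fT: "finite T" using Q finite_subset by blast
  have sT: "sum w T \<le> sum w Q"
    using Q cW assms(3) by (intro sum_mono2) auto
  define Iv where "Iv = v1_edges V v1 \<inter> I"
  define C where "C = v1_edges V v1 - I - X"
  obtain G where G: "G \<subseteq> C" "card G = 2 - card Iv" "F = Iv \<union> G" "\<forall>e\<in>G. \<forall>e'\<in>C - G. w e \<le> w e'"
    using TF(2) unfolding v1_connection_def Let_def Iv_def C_def by blast
  have fC: "finite C" unfolding C_def using v1_edges_finite[OF assms(1)] by simp
  have fg1: "finite g1" using fg unfolding g1_def by simp
  have Ivg1: "Iv \<subseteq> g1" using assms(8) unfolding Iv_def g1_def v1_edges_def by auto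
  define H where "H = g1 - Iv"
  have HC: "H \<subseteq> C"
  proof
    fix e assume "e \<in> H"
    then have e: "e \<in> g" "v1 \<in> e" "e \<notin> Iv" unfolding H_def g1_def by auto
    then obtain p q where pq: "p \<in> V" "q \<in> V" "p \<noteq> q" "e = {p,q}" using gc unfolding complete_edges_def by blast
    have "e \<in> v1_edges V v1"
    proof (cases "p = v1")
      case True then show ?thesis using pq unfolding v1_edges_def by blast
    next
      case False then have "q = v1" using pq e(2) by blast
      then show ?thesis using pq unfolding v1_edges_def by (auto simp: insert_commute)
    qed
    then show "e \<in> C" using e assms(9) unfolding C_def Iv_def by blast
  qed
  have r0: "rest ! 0 \<noteq> last rest"
  proof -
    have ne: "rest \<noteq> []" using lr by (cases rest) auto
    have "last rest = rest ! (length rest - 1)" using ne by (simp add: last_conv_nth)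
    moreover have "0 \<noteq> length rest - 1" using lr by simp
    moreover have "0 < length rest" "length rest - 1 < length rest" using lr by linarith+
    ultimately show ?thesis using nth_eq_iff_index_eq[OF dr, of 0 "length rest - 1"] by metis
  qed
  have two: "{{v1, rest!0}, {v1, last rest}} \<subseteq> g1"
    using cyc_v1[OF lr, of v1] vs'(4) rest unfolding g1_def by auto
  have "card {{v1, rest!0}, {v1, last rest}} = 2" using r0 by (auto simp: doubleton_eq_iff)
  then have cg1: "card g1 \<ge> 2" using card_mono[OF fg1 two] by simp
  have cH: "card H = card g1 - card Iv" unfolding H_def using Ivg1 fg1
    by (meson card_Diff_subset finite_subset)
  have "card G \<le> card H" using G(2) cH cg1 by simp
  moreover have "\<forall>e\<in>H. w e \<ge> 0" using nonneg unfolding H_def g1_def by blast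
  ultimately have sGH: "sum w G \<le> sum w H" using greedy_sum[OF fC G(1) HC _ G(4)] by blast
  have fIv: "finite Iv" using Ivg1 fg1 finite_subset by blast
  have fG: "finite G" using G(1) fC finite_subset by blast
  have sF: "sum w F = sum w Iv + sum w G"
    unfolding G(3) using fIv fG G(1) by (intro sum.union_disjoint) (auto simp: C_def Iv_def)
  have sg1: "sum w g1 = sum w Iv + sum w H"
    unfolding H_def using sum.subset_diff[OF Ivg1 fg1, of w] by linarith
  have Fv1: "\<forall>e\<in>F. v1 \<in> e" using G(1,3) unfolding C_def Iv_def v1_edges_def by auto
  have sOT: "sum w OT = sum w T + sum w F"
    unfolding TF(3) using Tv1 Fv1 fT fIv fG G(3) by (intro sum.union_disjoint) auto
  have sg: "sum w g = sum w P + sum w g1"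
  proof -
    have "g = P \<union> g1" "P \<inter> g1 = {}" unfolding P_def g1_def by auto
    then show ?thesis using fP fg1 by (simp add: sum.union_disjoint)
  qed
  show ?thesis using sOT sF sT Q(4) sGH sg1 sg by simp
qed

end
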